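(* Let $\nu$ be a Lévy measure on $\mathbb{R}$ such that $\int_{|y|>1}|y|\,\nu(dy)<\infty$ and $\nu$ has a density $\rho$ with $\rho(y)\le M/|y|^{1+\alpha}$ for $|y|\le1$, for some $M>0$ and $0\le\alpha<1$. Let $D=(\ell,r)$ be a bounded open interval, $s>0$, $D_s=D\times(0,s)$, and let $\phi$ be a function on $\mathbb{R}\times[0,s]$ that is Lipschitz continuous in its first variable and $1/2$-Hölder continuous in its second variable. Define $$I^f\phi(x,t)=\int_{\mathbb{R}}[\phi(x+y,t)-\phi(x,t)]\,\nu(dy).$$ Then $I^f\phi\in H^{1-\gamma,\frac{1-\gamma}{2}}(\overline{D_s})$ for every $\gamma\in(0,1)$ when $\alpha=0$, and $I^f\phi\in H^{1-\alpha,\frac{1-\alpha}{2}}(\overline{D_s})$ when $0<\alpha<1$.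
   Context: For $\beta\in(0,1)$ and a closed set $Q\subset\mathbb{R}\times[0,\infty)$, $H^{\beta,\beta/2}(Q)$ is the space of continuous functions $v$ on $Q$ with finite norm $\sup_Q|v|+\sup_{|x-x'|\le\rho_0}\frac{|v(x,t)-v(x',t)|}{|x-x'|^{\beta}}+\sup_{|t-t'|\le\rho_0}\frac{|v(x,t)-v(x,t')|}{|t-t'|^{\beta/2}}$ (points in $Q$), for a fixed constant $\rho_0>0$. *)

theory Defs
  imports "HOL-Analysis.Analysis"
begin

definition levy_measure :: "real measure \<Rightarrow> bool" where
  "levy_measure \<nu> \<longleftrightarrow> sets \<nu> = sets borel \<and> emeasure \<nu> {0} = 0 \<and>
     (\<integral>\<^sup>+ y. ennreal (min 1 (y\<^sup>2)) \<partial>\<nu>) < \<infinity>"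

definition hoelder_space :: "real \<Rightarrow> real \<Rightarrow> (real \<times> real) set \<Rightarrow> (real \<times> real \<Rightarrow> real) \<Rightarrow> bool" where
  "hoelder_space \<rho>0 \<beta> Q v \<longleftrightarrow>
     continuous_on Q v \<and>
     (\<exists>B. \<forall>p\<in>Q. \<bar>v p\<bar> \<le> B) \<and>
     (\<exists>C. \<forall>x x' t. (x, t) \<in> Q \<longrightarrow> (x', t) \<in> Q \<longrightarrow> \<bar>x - x'\<bar> \<le> \<rho>0 \<longrightarrow>
          \<bar>v (x, t) - v (x', t)\<bar> \<le> C * \<bar>x - x'\<bar> powr \<beta>) \<and>
     (\<exists>C. \<forall>x t t'. (x, t) \<in> Q \<longrightarrow> (x, t') \<in> Q \<longrightarrow> \<bar>t - t'\<bar> \<le> \<rho>0 \<longrightarrow>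
          \<bar>v (x, t) - v (x, t')\<bar> \<le> C * \<bar>t - t'\<bar> powr (\<beta> / 2))"

definition nonlocal_op :: "real measure \<Rightarrow> (real \<Rightarrow> real \<Rightarrow> real) \<Rightarrow> real \<times> real \<Rightarrow> real" where
  "nonlocal_op \<nu> \<phi> p = (\<integral> y. (\<phi> (fst p + y) (snd p) - \<phi> (fst p) (snd p)) \<partial>\<nu>)"

end

theory Submission
  imports Defs
begin


lemma reflect_nn:
  fixes f :: "real \<Rightarrow> ennreal"
  assumes "f \<in> borel_measurable borel"
  shows "(\<integral>\<^sup>+ y. f (- y) \<partial>lborel) = (\<integral>\<^sup>+ y. f y \<partial>lborel)"
proof -
  have "(\<integral>\<^sup>+ y. f y \<partial>lborel) = (\<integral>\<^sup>+ y. f y \<partial>(distr lborel borel uminus))"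
    by (simp add: lborel_distr_uminus)
  also have "\<dots> = (\<integral>\<^sup>+ y. f (- y) \<partial>lborel)"
    using assms by (subst nn_integral_distr) auto
  finally show ?thesis by simp
qed

lemma small_part:
  fixes a \<eta> :: real
  assumes a: "0 < a" "a < 1" and eta: "0 < \<eta>"
  shows "(\<integral>\<^sup>+ y. ennreal (indicator {-1..1} y * \<bar>y\<bar> powr (-1-a) * min \<bar>y\<bar> \<eta>) \<partial>lborel)
     \<le> ennreal (2 * (\<eta> powr (1-a) / (1-a) + \<eta> powr (1-a) / a))"
proof -
  define g where "g u = indicator {0..\<eta>} u * u powr (-a) + indicator {\<eta>..} u * (\<eta> * u powr (-1-a))" for u :: real
  have gnn: "g u \<ge> 0" for u using eta unfolding g_def by (auto simp: indicator_def)
  have gmeas: "(\<lambda>u. ennreal (g u)) \<in> borel_measurable borel"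
    unfolding g_def by measurable
  have gneg: "g u = 0" if "u < 0" for u using that eta unfolding g_def by (auto simp: indicator_def)
  have pw: "ennreal (indicator {-1..1} y * \<bar>y\<bar> powr (-1-a) * min \<bar>y\<bar> \<eta>) \<le> ennreal (g y) + ennreal (g (-y))" for y
  proof -
    have "indicator {-1..1} y * \<bar>y\<bar> powr (-1-a) * min \<bar>y\<bar> \<eta> \<le> g \<bar>y\<bar>"
    proof (cases "y = 0")
      case True then show ?thesis using gnn by simp
    next
      case False
      then have yp: "\<bar>y\<bar> > 0" by simp
      have "\<bar>y\<bar> powr (-1-a) * min \<bar>y\<bar> \<eta> \<le> g \<bar>y\<bar>"
      proof (cases "\<bar>y\<bar> \<le> \<eta>")
        case True
        have "\<bar>y\<bar> powr (-1-a) * \<bar>y\<bar> = \<bar>y\<bar> powr (-a)"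
          using yp powr_add[of "\<bar>y\<bar>" "-1-a" 1] by simp
        moreover have "0 \<le> indicator {\<eta>..} \<bar>y\<bar> * (\<eta> * \<bar>y\<bar> powr (-1-a))" using eta by (auto simp: indicator_def)
        ultimately show ?thesis using True yp unfolding g_def by (auto simp: indicator_def)
      next
        case False
        then show ?thesis unfolding g_def by (auto simp: indicator_def mult.commute)
      qed
      moreover have "0 \<le> \<bar>y\<bar> powr (-1-a) * min \<bar>y\<bar> \<eta>" using eta by simp
      ultimately show ?thesis by (auto simp: indicator_def gnn)
    qed
    moreover have "g \<bar>y\<bar> \<le> g y + g (-y)" using gnn gneg
      by (cases "y \<ge> 0") (auto simp: abs_if)
    ultimately have "indicator {-1..1} y * \<bar>y\<bar> powr (-1-a) * min \<bar>y\<bar> \<eta> \<le> g y + g (-y)" by linarith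
    then show ?thesis using gnn by (simp add: ennreal_plus[symmetric] del: ennreal_plus)
  qed
  have I1: "(\<integral>\<^sup>+ u. ennreal (u powr (-a)) * indicator {0..\<eta>} u \<partial>lborel) = ennreal (\<eta> powr (1-a) / (1-a))"
    using has_integral_powr_from_0[of "-a" \<eta>] a eta
    by (subst nn_integral_has_integral_lebesgue') auto
  have I2: "(\<integral>\<^sup>+ u. ennreal (\<eta> * u powr (-1-a)) * indicator {\<eta>..} u \<partial>lborel) = ennreal (\<eta> * (\<eta> powr (-a) / a))"
  proof -
    have "((\<lambda>u. u powr (-1-a)) has_integral (\<eta> powr (-a) / a)) {\<eta>..}"
      using has_integral_powr_to_inf[of "-1-a" \<eta>] a eta by simp
    then have "((\<lambda>u. \<eta> * u powr (-1-a)) has_integral (\<eta> * (\<eta> powr (-a) / a))) {\<eta>..}"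
      by (rule has_integral_mult_right)
    then show ?thesis using eta by (subst nn_integral_has_integral_lebesgue') auto
  qed
  have eq: "\<eta> * \<eta> powr (-a) = \<eta> powr (1-a)" using eta by (simp add: powr_diff powr_minus divide_inverse)
  have "(\<integral>\<^sup>+ y. ennreal (g y) \<partial>lborel) = (\<integral>\<^sup>+ u. ennreal (u powr (-a)) * indicator {0..\<eta>} u + ennreal (\<eta> * u powr (-1-a)) * indicator {\<eta>..} u \<partial>lborel)"
    unfolding g_def by (intro nn_integral_cong) (auto simp: indicator_def ennreal_plus[symmetric] simp del: ennreal_plus)
  also have "\<dots> = ennreal (\<eta> powr (1-a) / (1-a)) + ennreal (\<eta> * (\<eta> powr (-a) / a))"
    by (subst nn_integral_add) (auto simp: I1 I2)
  also have "\<dots> = ennreal (\<eta> powr (1-a) / (1-a) + \<eta> powr (1-a) / a)"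
    using a eq by (simp add: ennreal_plus[symmetric] del: ennreal_plus)
  finally have Ig: "(\<integral>\<^sup>+ y. ennreal (g y) \<partial>lborel) = ennreal (\<eta> powr (1-a) / (1-a) + \<eta> powr (1-a) / a)" .
  have "(\<integral>\<^sup>+ y. ennreal (indicator {-1..1} y * \<bar>y\<bar> powr (-1-a) * min \<bar>y\<bar> \<eta>) \<partial>lborel)
     \<le> (\<integral>\<^sup>+ y. ennreal (g y) + ennreal (g (-y)) \<partial>lborel)"
    by (intro nn_integral_mono pw)
  also have "\<dots> = (\<integral>\<^sup>+ y. ennreal (g y) \<partial>lborel) + (\<integral>\<^sup>+ y. ennreal (g (-y)) \<partial>lborel)"
    using gmeas by (subst nn_integral_add) auto
  also have "\<dots> = 2 * ennreal (\<eta> powr (1-a) / (1-a) + \<eta> powr (1-a) / a)"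
    using reflect_nn[OF gmeas] Ig by (simp add: mult_2)
  also have "\<dots> = ennreal (2 * (\<eta> powr (1-a) / (1-a) + \<eta> powr (1-a) / a))"
    using a by (subst ennreal_mult) auto
  finally show ?thesis .
qed

lemma rho_pw:
  fixes \<rho> :: "real \<Rightarrow> real" and M \<alpha> a \<eta> y :: real
  assumes \<rho>_nonneg: "\<And>y. \<rho> y \<ge> 0" and M: "M > 0" and \<alpha>a: "0 \<le> \<alpha>" "\<alpha> \<le> a"
    and \<rho>_bound: "\<And>y. y \<noteq> 0 \<Longrightarrow> \<bar>y\<bar> \<le> 1 \<Longrightarrow> \<rho> y \<le> M / \<bar>y\<bar> powr (1 + \<alpha>)"
    and eta: "0 < \<eta>" "\<eta> \<le> 1"
  shows "\<rho> y * min \<bar>y\<bar> \<eta> \<le> M * (indicator {-1..1} y * \<bar>y\<bar> powr (-1-a) * min \<bar>y\<bar> \<eta>)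
            + \<eta> * (\<rho> y * (indicator {y. \<bar>y\<bar> > 1} y * \<bar>y\<bar>))"
proof -
  have t2: "0 \<le> \<eta> * (\<rho> y * (indicator {y. \<bar>y\<bar> > 1} y * \<bar>y\<bar>))"
    using eta \<rho>_nonneg[of y] by (auto simp: indicator_def)
  have t1: "0 \<le> M * (indicator {-1..1} y * \<bar>y\<bar> powr (-1-a) * min \<bar>y\<bar> \<eta>)"
    using M eta by (auto simp: indicator_def)
  show ?thesis
  proof (cases "y = 0")
    case True then show ?thesis using t1 t2 eta by simp
  next
    case False
    show ?thesis
    proof (cases "\<bar>y\<bar> \<le> 1")
      case True
      have yp: "\<bar>y\<bar> > 0" using False by simp
      have "\<bar>y\<bar> powr (1 + a) \<le> \<bar>y\<bar> powr (1 + \<alpha>)"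
        using True \<alpha>a by (intro powr_mono') auto
      then have "M / \<bar>y\<bar> powr (1 + \<alpha>) \<le> M / \<bar>y\<bar> powr (1 + a)"
        using M yp by (intro divide_left_mono) auto
      also have "\<dots> = M * \<bar>y\<bar> powr (-1-a)"
        using powr_minus[of "\<bar>y\<bar>" "1+a"] by (simp add: divide_inverse)
      finally have "\<rho> y \<le> M * \<bar>y\<bar> powr (-1-a)" using \<rho>_bound[OF False True] by linarith
      then have "\<rho> y * min \<bar>y\<bar> \<eta> \<le> M * \<bar>y\<bar> powr (-1-a) * min \<bar>y\<bar> \<eta>"
        using eta by (intro mult_right_mono) auto
      then show ?thesis using True t2 by (auto simp: indicator_def mult.assoc)
    next
      case False
      then have "min \<bar>y\<bar> \<eta> = \<eta>" using eta by auto
      moreover have "\<rho> y * 1 \<le> \<rho> y * \<bar>y\<bar>"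
        using False \<rho>_nonneg[of y] by (intro mult_left_mono) auto
      then have "\<rho> y * \<eta> \<le> \<eta> * (\<rho> y * \<bar>y\<bar>)"
        using eta by (simp add: mult.commute mult_left_mono)
      ultimately show ?thesis using False t1 by (auto simp: indicator_def)
    qed
  qed
qed

lemma moment_bound:
  fixes \<rho> :: "real \<Rightarrow> real" and \<nu> :: "real measure" and M \<alpha> \<beta> \<eta> J :: real
  assumes dens: "\<nu> = density lborel (\<lambda>y. ennreal (\<rho> y))"
    and \<rho>_meas: "\<rho> \<in> borel_measurable borel"
    and \<rho>_nonneg: "\<And>y. \<rho> y \<ge> 0" and M: "M > 0"
    and \<alpha>: "0 \<le> \<alpha>" and \<beta>: "0 < \<beta>" "\<beta> < 1" "\<beta> \<le> 1 - \<alpha>"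
    and \<rho>_bound: "\<And>y. y \<noteq> 0 \<Longrightarrow> \<bar>y\<bar> \<le> 1 \<Longrightarrow> \<rho> y \<le> M / \<bar>y\<bar> powr (1 + \<alpha>)"
    and J: "(\<integral>\<^sup>+ y. indicator {y. \<bar>y\<bar> > 1} y * ennreal \<bar>y\<bar> \<partial>\<nu>) = ennreal J" "0 \<le> J"
    and eta: "0 < \<eta>" "\<eta> \<le> 1"
  shows "(\<integral>\<^sup>+ y. ennreal (min \<bar>y\<bar> \<eta>) \<partial>\<nu>) \<le> ennreal ((2 * M * (1/\<beta> + 1/(1-\<beta>)) + J) * \<eta> powr \<beta>)"
proof -
  define a where "a = 1 - \<beta>"
  have a: "0 < a" "a < 1" "\<alpha> \<le> a" using \<beta> unfolding a_def by auto
  define S where "S y = indicator {-1..1} y * \<bar>y\<bar> powr (-1-a) * min \<bar>y\<bar> \<eta>" for y :: real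
  have Snn: "S y \<ge> 0" for y unfolding S_def using eta by (auto simp: indicator_def)
  have Smeas: "(\<lambda>y. ennreal (S y)) \<in> borel_measurable borel" unfolding S_def by measurable
  have e1: "(\<integral>\<^sup>+ y. ennreal (min \<bar>y\<bar> \<eta>) \<partial>\<nu>) = (\<integral>\<^sup>+ y. ennreal (\<rho> y) * ennreal (min \<bar>y\<bar> \<eta>) \<partial>lborel)"
    unfolding dens using \<rho>_meas by (subst nn_integral_density) auto
  have e2: "(\<integral>\<^sup>+ y. indicator {y. \<bar>y\<bar> > 1} y * ennreal \<bar>y\<bar> \<partial>\<nu>)
      = (\<integral>\<^sup>+ y. ennreal (\<rho> y) * (indicator {y. \<bar>y\<bar> > 1} y * ennreal \<bar>y\<bar>) \<partial>lborel)"
    unfolding dens using \<rho>_meas by (subst nn_integral_density) auto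
  have pw: "ennreal (\<rho> y) * ennreal (min \<bar>y\<bar> \<eta>)
     \<le> ennreal M * ennreal (S y) + ennreal \<eta> * (ennreal (\<rho> y) * (indicator {y. \<bar>y\<bar> > 1} y * ennreal \<bar>y\<bar>))" for y
  proof -
    have r: "\<rho> y * min \<bar>y\<bar> \<eta> \<le> M * S y + \<eta> * (\<rho> y * (indicator {y. \<bar>y\<bar> > 1} y * \<bar>y\<bar>))"
      unfolding S_def by (rule rho_pw[OF \<rho>_nonneg M \<alpha> a(3) \<rho>_bound eta])
    have l: "ennreal (\<rho> y) * ennreal (min \<bar>y\<bar> \<eta>) = ennreal (\<rho> y * min \<bar>y\<bar> \<eta>)"
      using \<rho>_nonneg[of y] eta by (simp add: ennreal_mult)
    have i: "ennreal (indicator {y. \<bar>y\<bar> > 1} y * \<bar>y\<bar>) = indicator {y. \<bar>y\<bar> > 1} y * ennreal \<bar>y\<bar>"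
      by (auto simp: indicator_def)
    have "ennreal (M * S y + \<eta> * (\<rho> y * (indicator {y. \<bar>y\<bar> > 1} y * \<bar>y\<bar>)))
       = ennreal (M * S y) + ennreal (\<eta> * (\<rho> y * (indicator {y. \<bar>y\<bar> > 1} y * \<bar>y\<bar>)))"
      using M Snn[of y] eta \<rho>_nonneg[of y] by (intro ennreal_plus) auto
    also have "\<dots> = ennreal M * ennreal (S y) + ennreal \<eta> * (ennreal (\<rho> y) * (indicator {y. \<bar>y\<bar> > 1} y * ennreal \<bar>y\<bar>))"
      using M Snn[of y] eta \<rho>_nonneg[of y] by (simp add: ennreal_mult i[symmetric])
    finally show ?thesis using r l by (metis ennreal_leI)
  qed
  have "(\<integral>\<^sup>+ y. ennreal (min \<bar>y\<bar> \<eta>) \<partial>\<nu>)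
     \<le> (\<integral>\<^sup>+ y. ennreal M * ennreal (S y) + ennreal \<eta> * (ennreal (\<rho> y) * (indicator {y. \<bar>y\<bar> > 1} y * ennreal \<bar>y\<bar>)) \<partial>lborel)"
    unfolding e1 by (intro nn_integral_mono pw)
  also have "\<dots> = ennreal M * (\<integral>\<^sup>+ y. ennreal (S y) \<partial>lborel) + ennreal \<eta> * (\<integral>\<^sup>+ y. ennreal (\<rho> y) * (indicator {y. \<bar>y\<bar> > 1} y * ennreal \<bar>y\<bar>) \<partial>lborel)"
    using Smeas \<rho>_meas by (subst nn_integral_add) (auto simp: nn_integral_cmult)
  also have "\<dots> \<le> ennreal M * ennreal (2 * (\<eta> powr (1-a) / (1-a) + \<eta> powr (1-a) / a)) + ennreal \<eta> * ennreal J"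
    using small_part[OF a(1,2) eta(1)] e2 J(1) unfolding S_def
    by (intro add_mono mult_left_mono) auto
  also have "\<dots> = ennreal (M * (2 * (\<eta> powr (1-a) / (1-a) + \<eta> powr (1-a) / a)) + \<eta> * J)"
    using M a eta J(2) by (simp add: ennreal_mult ennreal_plus)
  also have "\<dots> \<le> ennreal ((2 * M * (1/\<beta> + 1/(1-\<beta>)) + J) * \<eta> powr \<beta>)"
  proof (rule ennreal_leI)
    have "\<eta> \<le> \<eta> powr \<beta>"
      using powr_mono'[of \<beta> 1 \<eta>] eta \<beta> by simp
    then have "\<eta> * J \<le> \<eta> powr \<beta> * J" using J(2) by (intro mult_right_mono)
    then show "M * (2 * (\<eta> powr (1-a) / (1-a) + \<eta> powr (1-a) / a)) + \<eta> * J
        \<le> (2 * M * (1/\<beta> + 1/(1-\<beta>)) + J) * \<eta> powr \<beta>"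
      unfolding a_def by (simp add: algebra_simps)
  qed
  finally show ?thesis .
qed

lemma main_holder:
  fixes \<rho> :: "real \<Rightarrow> real" and \<nu> :: "real measure"
    and M \<alpha> \<beta> l r s L \<rho>0 :: real and \<phi> :: "real \<Rightarrow> real \<Rightarrow> real"
  assumes dens: "\<nu> = density lborel (\<lambda>y. ennreal (\<rho> y))"
    and \<rho>_meas: "\<rho> \<in> borel_measurable borel"
    and \<rho>_nonneg: "\<And>y. \<rho> y \<ge> 0"
    and big_jumps: "(\<integral>\<^sup>+ y. indicator {y. \<bar>y\<bar> > 1} y * ennreal \<bar>y\<bar> \<partial>\<nu>) < \<infinity>"
    and M_pos: "M > 0" and \<alpha>: "0 \<le> \<alpha>"
    and \<beta>: "0 < \<beta>" "\<beta> < 1" "\<beta> \<le> 1 - \<alpha>"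
    and \<rho>_bound: "\<And>y. y \<noteq> 0 \<Longrightarrow> \<bar>y\<bar> \<le> 1 \<Longrightarrow> \<rho> y \<le> M / \<bar>y\<bar> powr (1 + \<alpha>)"
    and s_pos: "s > 0"
    and lip: "\<And>x x' t. t \<in> {0..s} \<Longrightarrow> \<bar>\<phi> x t - \<phi> x' t\<bar> \<le> L * \<bar>x - x'\<bar>"
    and hoel: "\<And>x t t'. t \<in> {0..s} \<Longrightarrow> t' \<in> {0..s} \<Longrightarrow>
                 \<bar>\<phi> x t - \<phi> x t'\<bar> \<le> L * \<bar>t - t'\<bar> powr (1/2)"
  shows "hoelder_space \<rho>0 \<beta> ({l..r} \<times> {0..s}) (nonlocal_op \<nu> \<phi>)"
proof -
  define Q where "Q = {l..r} \<times> {0..s}"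
  define V where "V = nonlocal_op \<nu> \<phi>"
  have sn: "sets \<nu> = sets borel" unfolding dens by simp
  have mT: "f \<in> borel_measurable \<nu>" if "f \<in> borel_measurable borel" for f :: "real \<Rightarrow> real"
    using that by (subst measurable_cong_sets[OF sn refl])
  have mTe: "f \<in> borel_measurable \<nu>" if "f \<in> borel_measurable borel" for f :: "real \<Rightarrow> ennreal"
    using that by (subst measurable_cong_sets[OF sn refl])
  have L0: "L \<ge> 0" using lip[of 0 1 0] s_pos by simp
  define Jb where "Jb = (\<integral>\<^sup>+ y. indicator {y. \<bar>y\<bar> > 1} y * ennreal \<bar>y\<bar> \<partial>\<nu>)"
  define J where "J = enn2real Jb"
  have J: "Jb = ennreal J" "0 \<le> J" using big_jumps unfolding J_def Jb_def by auto
  define C where "C = 2 * M * (1/\<beta> + 1/(1-\<beta>)) + J"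
  have C0: "C \<ge> 0" unfolding C_def using M_pos \<beta> J by auto
  have mb: "(\<integral>\<^sup>+ y. ennreal (min \<bar>y\<bar> \<eta>) \<partial>\<nu>) \<le> ennreal (C * \<eta> powr \<beta>)" if "0 < \<eta>" "\<eta> \<le> 1" for \<eta>
    unfolding C_def by (rule moment_bound[OF dens \<rho>_meas \<rho>_nonneg M_pos \<alpha> \<beta> \<rho>_bound J(1)[unfolded Jb_def] J(2) that])
  have int_abs: "integrable \<nu> (\<lambda>y. \<bar>y\<bar>)"
  proof (rule integrableI_nonneg)
    show "(\<lambda>y. \<bar>y\<bar>) \<in> borel_measurable \<nu>" by (rule mT) simp
    show "AE x in \<nu>. 0 \<le> \<bar>x\<bar>" by simp
    have "(\<integral>\<^sup>+ y. ennreal \<bar>y\<bar> \<partial>\<nu>) \<le> (\<integral>\<^sup>+ y. ennreal (min \<bar>y\<bar> 1) + indicator {y. \<bar>y\<bar> > 1} y * ennreal \<bar>y\<bar> \<partial>\<nu>)"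
      by (intro nn_integral_mono) (auto simp: indicator_def)
    also have "\<dots> = (\<integral>\<^sup>+ y. ennreal (min \<bar>y\<bar> 1) \<partial>\<nu>) + Jb"
      unfolding Jb_def by (subst nn_integral_add) (auto intro!: mTe mT)
    also have "\<dots> \<le> ennreal (C * 1 powr \<beta>) + ennreal J"
      using mb[of 1] J by (intro add_mono) auto
    also have "\<dots> < \<infinity>" by simp
    finally show "(\<integral>\<^sup>+ y. ennreal \<bar>y\<bar> \<partial>\<nu>) < \<infinity>" .
  qed
  define K0 where "K0 = (\<integral> y. \<bar>y\<bar> \<partial>\<nu>)"
  have K0: "K0 \<ge> 0" unfolding K0_def by simp
  define Cf where "Cf = max C K0"
  have Cf0: "Cf \<ge> 0" unfolding Cf_def using C0 by simp
  have int_min: "integrable \<nu> (\<lambda>y. min \<bar>y\<bar> \<eta>)" if "0 \<le> \<eta>" for \<eta>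
    by (rule Bochner_Integration.integrable_bound[OF int_abs]) (auto intro: mT simp: that)
  have bmin: "(\<integral> y. min \<bar>y\<bar> \<eta> \<partial>\<nu>) \<le> Cf * \<eta> powr \<beta>" if "0 \<le> \<eta>" for \<eta>
  proof (cases "\<eta> = 0")
    case True then show ?thesis by simp
  next
    case False
    show ?thesis
    proof (cases "\<eta> \<le> 1")
      case True
      have "ennreal (\<integral> y. min \<bar>y\<bar> \<eta> \<partial>\<nu>) = (\<integral>\<^sup>+ y. ennreal (min \<bar>y\<bar> \<eta>) \<partial>\<nu>)"
        using that by (intro nn_integral_eq_integral[symmetric] int_min) auto
      also have "\<dots> \<le> ennreal (C * \<eta> powr \<beta>)" using mb False that True by auto
      finally have "(\<integral> y. min \<bar>y\<bar> \<eta> \<partial>\<nu>) \<le> C * \<eta> powr \<beta>"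
        using C0 by (subst (asm) ennreal_le_iff) auto
      also have "\<dots> \<le> Cf * \<eta> powr \<beta>" unfolding Cf_def by (intro mult_right_mono) auto
      finally show ?thesis .
    next
      case False
      have "(\<integral> y. min \<bar>y\<bar> \<eta> \<partial>\<nu>) \<le> K0"
        unfolding K0_def using that by (intro integral_mono int_min int_abs) auto
      also have "\<dots> \<le> K0 * \<eta> powr \<beta>"
        using K0 False \<beta> ge_one_powr_ge_zero[of \<eta> \<beta>] using mult_left_mono[of 1 "\<eta> powr \<beta>" K0] by simp
      also have "\<dots> \<le> Cf * \<eta> powr \<beta>" unfolding Cf_def by (intro mult_right_mono) auto
      finally show ?thesis .
    qed
  qed
  define f where "f x t y = \<phi> (x + y) t - \<phi> x t" for x t y
  have vdef: "V (x, t) = (\<integral> y. f x t y \<partial>\<nu>)" for x t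
    unfolding V_def nonlocal_op_def f_def by simp
  have fmeas: "f x t \<in> borel_measurable \<nu>" if "t \<in> {0..s}" for x t
  proof (rule mT, rule borel_measurable_continuous_onI)
    have "L-lipschitz_on UNIV (\<lambda>y. f x t y)"
      using lip[OF that] L0 unfolding f_def
      by (intro lipschitz_onI) (auto simp: dist_real_def intro: order.trans[OF lip[OF that]])
    then show "continuous_on UNIV (f x t)" by (rule lipschitz_on_continuous_on)
  qed
  have fbound: "\<bar>f x t y\<bar> \<le> L * \<bar>y\<bar>" if "t \<in> {0..s}" for x t y
    using lip[OF that, of "x + y" x] unfolding f_def by simp
  have int_L: "integrable \<nu> (\<lambda>y. L * \<bar>y\<bar>)" using int_abs by simp
  have fint: "integrable \<nu> (f x t)" if "t \<in> {0..s}" for x t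
    by (rule Bochner_Integration.integrable_bound[OF int_L fmeas[OF that]])
      (use fbound[OF that] L0 in \<open>auto simp: abs_mult\<close>)
  define D where "D = 2 * L * Cf"
  have D0: "D \<ge> 0" unfolding D_def using L0 Cf0 by simp
  have key: "\<bar>V (a, t) - V (b, t')\<bar> \<le> D * (\<bar>a - b\<bar> + \<bar>t - t'\<bar> powr (1/2)) powr \<beta>"
    if t: "t \<in> {0..s}" "t' \<in> {0..s}" for a b t t'
  proof -
    define \<eta> where "\<eta> = \<bar>a - b\<bar> + \<bar>t - t'\<bar> powr (1/2)"
    have \<eta>0: "\<eta> \<ge> 0" unfolding \<eta>_def by simp
    have pw: "norm (f a t y - f b t' y) \<le> 2 * L * min \<bar>y\<bar> \<eta>" for y
    proof -
      have 1: "\<bar>f a t y - f b t' y\<bar> \<le> 2 * L * \<bar>y\<bar>"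
        using fbound[OF t(1), of a y] fbound[OF t(2), of b y] by simp
      have h1: "\<bar>\<phi> (a + y) t - \<phi> (b + y) t'\<bar> \<le> L * \<eta>"
        using lip[OF t(1), of "a + y" "b + y"] hoel[OF t, of "b + y"] unfolding \<eta>_def
        by (simp add: algebra_simps)
      have h2: "\<bar>\<phi> a t - \<phi> b t'\<bar> \<le> L * \<eta>"
        using lip[OF t(1), of a b] hoel[OF t, of b] unfolding \<eta>_def
        by (simp add: algebra_simps)
      have 2: "\<bar>f a t y - f b t' y\<bar> \<le> 2 * L * \<eta>"
        using h1 h2 unfolding f_def by simp
      show ?thesis using 1 2 by (simp add: min_def)
    qed
    have "V (a, t) - V (b, t') = (\<integral> y. f a t y - f b t' y \<partial>\<nu>)"
      unfolding vdef using fint[OF t(1)] fint[OF t(2)] by simp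
    also have "norm \<dots> \<le> (\<integral> y. norm (f a t y - f b t' y) \<partial>\<nu>)"
      by (rule integral_norm_bound)
    also have "\<dots> \<le> (\<integral> y. 2 * L * min \<bar>y\<bar> \<eta> \<partial>\<nu>)"
      using fint[OF t(1)] fint[OF t(2)] int_min[OF \<eta>0] pw
      by (intro integral_mono) auto
    also have "\<dots> = 2 * L * (\<integral> y. min \<bar>y\<bar> \<eta> \<partial>\<nu>)" by simp
    also have "\<dots> \<le> 2 * L * (Cf * \<eta> powr \<beta>)"
      using bmin[OF \<eta>0] L0 by (intro mult_left_mono) auto
    finally show ?thesis unfolding D_def \<eta>_def by (simp add: mult.assoc)
  qed
  have QI: "(x, t) \<in> Q \<Longrightarrow> t \<in> {0..s}" for x t unfolding Q_def by auto
  have "continuous_on Q V"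
    unfolding continuous_on_def
  proof safe
    fix x t assume p: "(x, t) \<in> Q"
    define g where "g q = D * (\<bar>fst q - x\<bar> + \<bar>snd q - t\<bar> powr (1/2)) powr \<beta>" for q :: "real \<times> real"
    have "((\<lambda>q. V q - V (x, t)) \<longlongrightarrow> 0) (at (x, t) within Q)"
    proof (rule Lim_null_comparison)
      show "\<forall>\<^sub>F q in at (x, t) within Q. norm (V q - V (x, t)) \<le> g q"
        unfolding eventually_at_filter
        by (rule always_eventually) (auto simp: g_def intro!: key QI p)
      have t1: "((\<lambda>q. \<bar>fst q - x\<bar>) \<longlongrightarrow> 0) (at (x, t) within Q)"
        by (intro tendsto_rabs_zero) (auto intro!: tendsto_eq_intros)
      have t2: "((\<lambda>q. \<bar>snd q - t\<bar>) \<longlongrightarrow> 0) (at (x, t) within Q)"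
        by (intro tendsto_rabs_zero) (auto intro!: tendsto_eq_intros)
      have t3: "((\<lambda>q. \<bar>snd q - t\<bar> powr (1/2)) \<longlongrightarrow> 0) (at (x, t) within Q)"
        by (rule tendsto_zero_powrI[OF t2]) auto
      have t4: "((\<lambda>q. (\<bar>fst q - x\<bar> + \<bar>snd q - t\<bar> powr (1/2)) powr \<beta>) \<longlongrightarrow> 0) (at (x, t) within Q)"
        using tendsto_add[OF t1 t3] \<beta> by (intro tendsto_zero_powrI) auto
      show "(g \<longlongrightarrow> 0) (at (x, t) within Q)"
        unfolding g_def using tendsto_mult_right_zero[OF t4, of D] by simp
    qed
    then show "(V \<longlongrightarrow> V (x, t)) (at (x, t) within Q)" by (simp add: LIM_zero_iff)
  qed
  moreover have "\<exists>B. \<forall>p\<in>Q. \<bar>V p\<bar> \<le> B"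
  proof (intro exI ballI)
    fix p assume "p \<in> Q"
    then obtain x t where p: "p = (x, t)" "t \<in> {0..s}" using QI by (cases p) auto
    have "\<bar>V p\<bar> \<le> (\<integral> y. norm (f x t y) \<partial>\<nu>)"
      unfolding p vdef using integral_norm_bound by (metis real_norm_def)
    also have "\<dots> \<le> (\<integral> y. L * \<bar>y\<bar> \<partial>\<nu>)"
      using fint[OF p(2)] int_L fbound[OF p(2)] by (intro integral_mono) auto
    finally show "\<bar>V p\<bar> \<le> L * K0" unfolding K0_def by simp
  qed
  moreover have "\<exists>C. \<forall>x x' t. (x, t) \<in> Q \<longrightarrow> (x', t) \<in> Q \<longrightarrow> \<bar>x - x'\<bar> \<le> \<rho>0 \<longrightarrow>
          \<bar>V (x, t) - V (x', t)\<bar> \<le> C * \<bar>x - x'\<bar> powr \<beta>"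
  proof (intro exI[of _ D] allI impI)
    fix x x' t assume "(x, t) \<in> Q" "(x', t) \<in> Q"
    then show "\<bar>V (x, t) - V (x', t)\<bar> \<le> D * \<bar>x - x'\<bar> powr \<beta>"
      using key[of t t x x'] QI by auto
  qed
  moreover have "\<exists>C. \<forall>x t t'. (x, t) \<in> Q \<longrightarrow> (x, t') \<in> Q \<longrightarrow> \<bar>t - t'\<bar> \<le> \<rho>0 \<longrightarrow>
          \<bar>V (x, t) - V (x, t')\<bar> \<le> C * \<bar>t - t'\<bar> powr (\<beta> / 2)"
  proof (intro exI[of _ D] allI impI)
    fix x t t' assume "(x, t) \<in> Q" "(x, t') \<in> Q"
    then have "\<bar>V (x, t) - V (x, t')\<bar> \<le> D * (\<bar>t - t'\<bar> powr (1/2)) powr \<beta>"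
      using key[of t t' x x] QI by auto
    also have "(\<bar>t - t'\<bar> powr (1/2)) powr \<beta> = \<bar>t - t'\<bar> powr (\<beta> / 2)"
      by (simp add: powr_powr)
    finally show "\<bar>V (x, t) - V (x, t')\<bar> \<le> D * \<bar>t - t'\<bar> powr (\<beta> / 2)" .
  qed
  ultimately show ?thesis unfolding hoelder_space_def Q_def V_def by blast
qed

theorem lemma3p1:
  fixes \<rho> :: "real \<Rightarrow> real" and \<nu> :: "real measure"
    and M \<alpha> l r s L \<rho>0 :: real and \<phi> :: "real \<Rightarrow> real \<Rightarrow> real"
  assumes levy: "levy_measure \<nu>"
    and dens: "\<nu> = density lborel (\<lambda>y. ennreal (\<rho> y))"
    and \<rho>_meas: "\<rho> \<in> borel_measurable borel"
    and \<rho>_nonneg: "\<And>y. \<rho> y \<ge> 0"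
    and big_jumps: "(\<integral>\<^sup>+ y. indicator {y. \<bar>y\<bar> > 1} y * ennreal \<bar>y\<bar> \<partial>\<nu>) < \<infinity>"
    and M_pos: "M > 0" and \<alpha>_range: "0 \<le> \<alpha>" "\<alpha> < 1"
    and \<rho>_bound: "\<And>y. y \<noteq> 0 \<Longrightarrow> \<bar>y\<bar> \<le> 1 \<Longrightarrow> \<rho> y \<le> M / \<bar>y\<bar> powr (1 + \<alpha>)"
    and lr: "l < r" and s_pos: "s > 0"
    and lip: "\<And>x x' t. t \<in> {0..s} \<Longrightarrow> \<bar>\<phi> x t - \<phi> x' t\<bar> \<le> L * \<bar>x - x'\<bar>"
    and hoel: "\<And>x t t'. t \<in> {0..s} \<Longrightarrow> t' \<in> {0..s} \<Longrightarrow>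
                 \<bar>\<phi> x t - \<phi> x t'\<bar> \<le> L * \<bar>t - t'\<bar> powr (1/2)"
    and \<rho>0_pos: "\<rho>0 > 0"
  shows "(\<alpha> = 0 \<longrightarrow> (\<forall>\<gamma>\<in>{0<..<1}. hoelder_space \<rho>0 (1 - \<gamma>)
              (closure ({l<..<r} \<times> {0<..<s})) (nonlocal_op \<nu> \<phi>)))
       \<and> (0 < \<alpha> \<longrightarrow> hoelder_space \<rho>0 (1 - \<alpha>)
              (closure ({l<..<r} \<times> {0<..<s})) (nonlocal_op \<nu> \<phi>))"
  proof -
  have Qeq: "closure ({l<..<r} \<times> {0<..<s}) = {l..r} \<times> {0..s}"
    using lr s_pos by (simp add: closure_Times)
  have H: "hoelder_space \<rho>0 \<beta> ({l..r} \<times> {0..s}) (nonlocal_op \<nu> \<phi>)"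
    if "0 < \<beta>" "\<beta> < 1" "\<beta> \<le> 1 - \<alpha>" for \<beta>
    by (rule main_holder[OF dens \<rho>_meas \<rho>_nonneg big_jumps M_pos \<alpha>_range(1) that \<rho>_bound s_pos lip hoel])
  show ?thesis unfolding Qeq using H \<alpha>_range by auto
qed

end
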